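(* Let $n\ge2$, $\mathbb W:=\mathbb R^{n\times n}_{\mathrm{sym}}$ with the Frobenius inner product, $D:=\{W\in\mathbb W: W\succeq0,\ \operatorname{rank}W\le1\}$, $G\colon\mathbb W\to\mathbb R^n$, $G(W):=\operatorname{diag}W$, and $C:=\{e\}$ with $e$ the all-ones vector. Let $W$ be feasible, i.e., $W\in D$ and $\operatorname{diag}W=e$; write $W=nuu^\top$ with $u\in\{\pm n^{-1/2}\}^n$. Then $\mathcal N^{\lim}_D(W)\subset\{Y\in\mathbb W: Yu=0\}$, and GMFCQ holds at $W$: whenever $\lambda\in\mathbb R^n$ and $Y\in\mathcal N^{\lim}_D(W)$ satisfy $\operatorname{Diag}(\lambda)+Y=0$, then $\lambda=0$.
   Context: For a closed set $D\subset\mathbb W$, $\Pi_D$ is the (multivalued) Frobenius-norm projection and the limiting normal cone at $\bar W\in D$ is $\mathcal N^{\lim}_D(\bar W):=\limsup_{W'\to\bar W}\operatorname{cone}(W'-\Pi_D(W'))$ (outer set limit). $\operatorname{Diag}(\lambda)$ is the diagonal matrix with diagonal $\lambda$; note $G'(W)^*\lambda=\operatorname{Diag}(\lambda)$ and $\mathcal N_C(G(W))=\mathbb R^n$, so this is the condition $0\in G'(W)^*\lambda+\mathcal N^{\lim}_D(W),\ \lambda\in\mathcal N_C(G(W))\Rightarrow\lambda=0$. Every feasible $W$ has the form $nuu^\top$ with $u\in\{\pm n^{-1/2}\}^n$. *)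

theory Defs
  imports "HOL-Analysis.Analysis"
begin

text \<open>The space W of symmetric n x n real matrices. The library norm on
  real^'n^'n is the Euclidean norm of the vector of rows, i.e. exactly the
  Frobenius norm, so dist below is the Frobenius distance.\<close>
definition sym_mats :: "(real^'n^'n) set" where
  "sym_mats = {W. transpose W = W}"

definition psd :: "real^'n^'n \<Rightarrow> bool" where
  "psd W \<longleftrightarrow> (\<forall>x. 0 \<le> x \<bullet> (W *v x))"

definition rankOneSet :: "(real^'n^'n) set" where
  "rankOneSet = {W \<in> sym_mats. psd W \<and> rank W \<le> 1}"

definition proj :: "(real^'n^'n) set \<Rightarrow> real^'n^'n \<Rightarrow> (real^'n^'n) set" where
  "proj S X = {P \<in> S. \<forall>Q\<in>S. dist X P \<le> dist X Q}"

text \<open>Limiting normal cone: outer (Painleve-Kuratowski) limit of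
  cone(W' - Proj_D(W')) as W' tends to Wbar within the space of symmetric matrices.\<close>
definition lim_normal_cone :: "(real^'n^'n) set \<Rightarrow> real^'n^'n \<Rightarrow> (real^'n^'n) set" where
  "lim_normal_cone S Wb = {Y. \<exists>Wk Yk.
      (\<forall>k. Wk k \<in> sym_mats) \<and> Wk \<longlonglongrightarrow> Wb \<and> Yk \<longlonglongrightarrow> Y \<and>
      (\<forall>k. Yk k \<in> cone hull {Wk k - P | P. P \<in> proj S (Wk k)})}"

definition diag_vec :: "real^'n^'n \<Rightarrow> real^'n" where
  "diag_vec W = (\<chi> i. W $ i $ i)"

definition Diag :: "real^'n \<Rightarrow> real^'n^'n" where
  "Diag l = (\<chi> i j. if i = j then l $ i else 0)"

definition outer :: "real^'n \<Rightarrow> real^'n \<Rightarrow> real^'n^'n" where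
  "outer u v = (\<chi> i j. u $ i * v $ j)"

end

theory Submission
  imports Defs
begin

lemma poly4_zero:
  fixes a b c d :: real
  assumes H: "\<forall>s. 0 \<le> a* s + b* s^2 + c* s^3 + d* s^4"
  shows "a = 0"
proof -
  define M where "M = \<bar>b\<bar> + \<bar>c\<bar> + \<bar>d\<bar> + 1"
  have M: "M > 0" unfolding M_def by simp
  have key: "\<bar>b* s + c* s^2 + d* s^3\<bar> \<le> \<bar>s\<bar> * M" if "\<bar>s\<bar> \<le> 1" for s :: real
  proof -
    have "\<bar>b* s + c* s^2 + d* s^3\<bar> \<le> \<bar>b\<bar>*\<bar>s\<bar> + \<bar>c\<bar>*\<bar>s\<bar>^2 + \<bar>d\<bar>*\<bar>s\<bar>^3"
    proof -
      have "\<bar>b* s + c* s^2 + d* s^3\<bar> \<le> \<bar>b* s + c* s^2\<bar> + \<bar>d* s^3\<bar>" by (rule abs_triangle_ineq)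
      moreover have "\<bar>b* s + c* s^2\<bar> \<le> \<bar>b* s\<bar> + \<bar>c* s^2\<bar>" by (rule abs_triangle_ineq)
      ultimately have "\<bar>b* s + c* s^2 + d* s^3\<bar> \<le> \<bar>b* s\<bar> + \<bar>c* s^2\<bar> + \<bar>d* s^3\<bar>" by linarith
      then show ?thesis by (simp add: abs_mult power_abs)
    qed
    also have "\<dots> \<le> \<bar>b\<bar>*\<bar>s\<bar> + \<bar>c\<bar>*\<bar>s\<bar> + \<bar>d\<bar>*\<bar>s\<bar>"
    proof -
      have "\<bar>s\<bar>^2 \<le> \<bar>s\<bar>^1" "\<bar>s\<bar>^3 \<le> \<bar>s\<bar>^1" using that
        by (intro power_decreasing; simp)+
      then show ?thesis by (intro add_mono mult_left_mono) auto
    qed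
    also have "\<dots> \<le> \<bar>s\<bar> * M" unfolding M_def by (simp add: algebra_simps)
    finally show ?thesis .
  qed
  have eq: "a* s + b* s^2 + c* s^3 + d* s^4 = s * (a + (b* s + c* s^2 + d* s^3))" for s :: real
    by (simp add: algebra_simps power2_eq_square power3_eq_cube power4_eq_xxxx)
  show ?thesis
  proof (rule ccontr)
    assume "a \<noteq> 0"
    define s where "s = sgn a * (- min 1 (\<bar>a\<bar> / (2*M)))"
    have t: "min 1 (\<bar>a\<bar> / (2*M)) > 0" using M \<open>a\<noteq>0\<close> by simp
    have sabs: "\<bar>s\<bar> = min 1 (\<bar>a\<bar> / (2*M))" unfolding s_def using \<open>a\<noteq>0\<close> t
      by (simp add: abs_mult)
    have "\<bar>s\<bar> \<le> 1" using sabs by simp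
    then have k: "\<bar>b* s + c* s^2 + d* s^3\<bar> \<le> \<bar>a\<bar>/2"
    proof -
      have "\<bar>s\<bar> * M \<le> (\<bar>a\<bar> / (2*M)) * M" using sabs M by (intro mult_right_mono) auto
      also have "\<dots> = \<bar>a\<bar>/2" using M by simp
      finally show ?thesis using key[of s] \<open>\<bar>s\<bar> \<le> 1\<close> by linarith
    qed
    have "s * (a + (b* s + c* s^2 + d* s^3)) < 0"
    proof (cases "a > 0")
      case True
      then have "s < 0" unfolding s_def using t by simp
      moreover have "a + (b* s + c* s^2 + d* s^3) > 0" using k True by linarith
      ultimately show ?thesis by (simp add: mult_neg_pos)
    next
      case False
      then have "a < 0" using \<open>a\<noteq>0\<close> by simp
      then have "s > 0" unfolding s_def using t by simp
      moreover have "a + (b* s + c* s^2 + d* s^3) < 0" using k \<open>a<0\<close> by linarith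
      ultimately show ?thesis by (simp add: mult_pos_neg)
    qed
    with H eq[of s] show False by (metis not_le)
  qed
qed


lemma matrix_add_rdistrib': "((B + C) ** A) = (B ** A) + (C ** A)"
  by (vector matrix_matrix_mult_def sum.distrib[symmetric] field_simps)

lemma transpose_add': "transpose (A + B) = transpose A + transpose B"
  by (vector transpose_def)

lemma rankOne_sym: "P \<in> rankOneSet \<Longrightarrow> transpose P = P"
  by (simp add: rankOneSet_def sym_mats_def)

lemma dot_transpose: "inner x (M *v y) = inner (transpose M *v x) (y::real^'n)"
  by (metis dot_lmul_matrix transpose_transpose vector_transpose_matrix)

lemma congr_in: 
  fixes P M :: "real^'n^'n"
  assumes "P \<in> rankOneSet"
  shows "M ** P ** transpose M \<in> rankOneSet"
proof -
  have s: "transpose P = P" using rankOne_sym[OF assms] .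
  have "transpose (M ** P ** transpose M) = M ** P ** transpose M"
    by (simp add: matrix_transpose_mul s matrix_mul_assoc)
  moreover have "psd (M ** P ** transpose M)"
    unfolding psd_def
  proof
    fix x :: "real^'n"
    have "x \<bullet> ((M ** P ** transpose M) *v x) = x \<bullet> (M *v (P *v (transpose M *v x)))"
      by (simp only: matrix_vector_mul_assoc matrix_mul_assoc)
    also have "\<dots> = (transpose M *v x) \<bullet> (P *v (transpose M *v x))"
      by (rule dot_transpose)
    finally show "0 \<le> x \<bullet> ((M ** P ** transpose M) *v x)"
      using assms by (simp add: rankOneSet_def psd_def)
  qed
  moreover have "rank (M ** P ** transpose M) \<le> 1"
  proof -
    have "rank (M ** P ** transpose M) \<le> rank (M ** P)" by (rule rank_mul_le_left)
    also have "\<dots> \<le> rank P" by (rule rank_mul_le_right)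
    finally show ?thesis using assms by (simp add: rankOneSet_def)
  qed
  ultimately show ?thesis by (simp add: rankOneSet_def sym_mats_def)
qed

lemma inner_outer: "inner (R::real^'n^'n) (outer w z) = w \<bullet> (R *v z)"
  by (simp add: inner_vec_def outer_def matrix_vector_mult_def sum_distrib_left mult_ac)

lemma outer_mul: "outer x y ** (P::real^'n^'n) = outer x (transpose P *v y)"
  by (vector outer_def matrix_matrix_mult_def matrix_vector_mult_def transpose_def sum_distrib_left mult_ac)

lemma mul_outer_t: "(P::real^'n^'n) ** transpose (outer x y) = outer (P *v y) x"
  by (vector outer_def matrix_matrix_mult_def matrix_vector_mult_def transpose_def sum_distrib_left mult_ac)




lemma transpose_diff': "transpose (A - B) = transpose A - transpose B"
  by (vector transpose_def)

lemma proj_orth: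
  fixes X P :: "real^'n^'n"
  assumes X: "X \<in> sym_mats" and P: "P \<in> proj rankOneSet X"
  shows "(X - P) *v (P *v y) = 0"
proof -
  have PD: "P \<in> rankOneSet" and opt: "\<forall>Q\<in>rankOneSet. dist X P \<le> dist X Q"
    using P by (auto simp: proj_def)
  define R where "R = X - P"
  have Ps: "transpose P = P" using rankOne_sym[OF PD] .
  have Rs: "transpose R = R" using X Ps by (simp add: R_def sym_mats_def transpose_diff')
  have main: "x \<bullet> (R *v (P *v y)) = 0" for x
  proof -
    define A where "A = outer x y"
    define B where "B = A ** P + P ** transpose A"
    define C where "C = A ** P ** transpose A"
    have Qeq: "(mat 1 + s *\<^sub>R A) ** P ** transpose (mat 1 + s *\<^sub>R A) = P + s *\<^sub>R B + s^2 *\<^sub>R C" for s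
      by (simp add: B_def C_def transpose_add' transpose_scalar matrix_add_ldistrib matrix_add_rdistrib'
          scalar_matrix_assoc[symmetric] matrix_scalar_ac power2_eq_square algebra_simps)
    have ineq: "0 \<le> (-2 * (R \<bullet> B)) * s + (B \<bullet> B - 2 * (R \<bullet> C)) * s^2 + (2 * (B \<bullet> C)) * s^3 + (C \<bullet> C) * s^4" for s
    proof -
      have "dist X P \<le> dist X (P + s *\<^sub>R B + s^2 *\<^sub>R C)"
        using opt congr_in[OF PD, of "mat 1 + s *\<^sub>R A"] Qeq[of s] by auto
      then have "norm R \<le> norm (R - s *\<^sub>R B - s^2 *\<^sub>R C)"
        by (simp add: dist_norm R_def algebra_simps)
      then have "norm R ^ 2 \<le> norm (R - s *\<^sub>R B - s^2 *\<^sub>R C) ^ 2"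
        by (simp add: power_mono)
      then have "R \<bullet> R \<le> (R - s *\<^sub>R B - s^2 *\<^sub>R C) \<bullet> (R - s *\<^sub>R B - s^2 *\<^sub>R C)"
        by (simp add: power2_norm_eq_inner)
      moreover have "(R - s *\<^sub>R B - s^2 *\<^sub>R C) \<bullet> (R - s *\<^sub>R B - s^2 *\<^sub>R C)
        = R \<bullet> R - 2 * s * (R \<bullet> B) + s^2 * (B \<bullet> B) - 2 * s^2 * (R \<bullet> C) + 2 * s^3 * (B \<bullet> C) + s^4 * (C \<bullet> C)"
        by (simp add: inner_diff_left inner_diff_right inner_commute[of B R] inner_commute[of C R]
            inner_commute[of C B] power2_eq_square power3_eq_cube power4_eq_xxxx algebra_simps)
      ultimately show ?thesis by (simp add: algebra_simps)
    qed
    have "-2 * (R \<bullet> B) = 0" by (rule poly4_zero) (use ineq in blast)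
    then have RB: "R \<bullet> B = 0" by simp
    have "R \<bullet> B = x \<bullet> (R *v (P *v y)) + (P *v y) \<bullet> (R *v x)"
      by (simp add: B_def A_def inner_add_right outer_mul mul_outer_t inner_outer Ps)
    also have "(P *v y) \<bullet> (R *v x) = x \<bullet> (R *v (P *v y))"
      by (metis dot_transpose Rs inner_commute)
    finally show ?thesis using RB by simp
  qed
  show ?thesis using main[of "R *v (P *v y)"] by (simp add: R_def)
qed



lemma mv_tendsto:
  fixes A :: "nat \<Rightarrow> real^'n^'n" and x :: "nat \<Rightarrow> real^'n"
  assumes "A \<longlonglongrightarrow> A0" "x \<longlonglongrightarrow> x0"
  shows "(\<lambda>k. A k *v x k) \<longlonglongrightarrow> A0 *v x0"
proof (rule vec_tendstoI)
  fix i
  have "(\<lambda>k. \<Sum>j\<in>UNIV. A k $ i $ j * x k $ j) \<longlonglongrightarrow> (\<Sum>j\<in>UNIV. A0 $ i $ j * x0 $ j)"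
    by (intro tendsto_intros assms)
  then show "(\<lambda>k. (A k *v x k) $ i) \<longlonglongrightarrow> (A0 *v x0) $ i"
    by (simp add: matrix_vector_mult_def)
qed

lemma scaleR_mv: "((c::real) *\<^sub>R A) *v x = c *\<^sub>R (A *v (x::real^'n))"
  by (vector matrix_vector_mult_def sum_distrib_left mult_ac)

lemma mv_scaleR: "A *v ((c::real) *\<^sub>R x) = c *\<^sub>R (A *v (x::real^'n))"
  by (vector matrix_vector_mult_def sum_distrib_left mult_ac)

lemma sym_iff: "transpose (A::real^'n^'n) = A \<longleftrightarrow> (\<forall>i j. A $ i $ j = A $ j $ i)"
  by (auto simp: transpose_def vec_eq_iff)

theorem mainTheorem16:
  fixes W :: "real^'n^'n" and u :: "real^'n"
  assumes "CARD('n) \<ge> 2"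
    and "W \<in> rankOneSet"
    and "diag_vec W = (\<chi> i. 1)"
    and "\<forall>i. u $ i = 1 / sqrt (real CARD('n)) \<or> u $ i = - 1 / sqrt (real CARD('n))"
    and "W = real CARD('n) *\<^sub>R outer u u"
  shows "lim_normal_cone rankOneSet W \<subseteq> {Y \<in> sym_mats. Y *v u = 0} \<and>
         (\<forall>l Y. Y \<in> lim_normal_cone rankOneSet W \<and> Diag l + Y = 0 \<longrightarrow> l = 0)"
proof -
  define n where "n = real CARD('n)"
  have npos: "n > 0" unfolding n_def by simp
  have usq: "u $ i * u $ i = 1 / n" for i
    using assms(4)[rule_format, of i] npos by (auto simp: n_def[symmetric])
  have unz: "u $ i \<noteq> 0" for i using usq[of i] npos by auto
  have uu: "u \<bullet> u = 1"
    using npos by (simp add: inner_vec_def usq n_def)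
  have Wu: "W *v u = n *\<^sub>R u"
  proof -
    have "outer u u *v u = (u \<bullet> u) *\<^sub>R u"
      by (vector outer_def matrix_vector_mult_def inner_vec_def sum_distrib_left sum_distrib_right mult_ac)
    then show ?thesis using assms(5) uu by (simp add: scaleR_mv n_def)
  qed
  have part1: "Y \<in> sym_mats \<and> Y *v u = 0" if Yin: "Y \<in> lim_normal_cone rankOneSet W" for Y
  proof -
    obtain Wk Yk where Wks: "\<forall>k. Wk k \<in> sym_mats" and WkW: "Wk \<longlonglongrightarrow> W" and YkY: "Yk \<longlonglongrightarrow> Y"
      and cone: "\<forall>k. Yk k \<in> cone hull {Wk k - P | P. P \<in> proj rankOneSet (Wk k)}"
      using Yin unfolding lim_normal_cone_def by blast
    have "\<forall>k. \<exists>cp. 0 \<le> fst cp \<and> snd cp \<in> proj rankOneSet (Wk k) \<and> Yk k = fst cp *\<^sub>R (Wk k - snd cp)"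
    proof
      fix k
      from cone[rule_format, of k] obtain c Z where "c \<ge> 0" "Z \<in> {Wk k - P | P. P \<in> proj rankOneSet (Wk k)}"
        "Yk k = c *\<^sub>R Z" unfolding cone_hull_expl by blast
      then obtain Q where "Q \<in> proj rankOneSet (Wk k)" "Yk k = c *\<^sub>R (Wk k - Q)" by blast
      then show "\<exists>cp. 0 \<le> fst cp \<and> snd cp \<in> proj rankOneSet (Wk k) \<and> Yk k = fst cp *\<^sub>R (Wk k - snd cp)"
        using \<open>c \<ge> 0\<close> by (intro exI[of _ "(c, Q)"]) simp
    qed
    then obtain cp where cp: "\<forall>k. 0 \<le> fst (cp k) \<and> snd (cp k) \<in> proj rankOneSet (Wk k) \<and> Yk k = fst (cp k) *\<^sub>R (Wk k - snd (cp k))"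
      by (metis choice)
    define c where "c k = fst (cp k)" for k
    define P where "P k = snd (cp k)" for k
    have Pproj: "P k \<in> proj rankOneSet (Wk k)" for k using cp by (simp add: P_def)
    have Ykeq: "Yk k = c k *\<^sub>R (Wk k - P k)" for k using cp by (simp add: P_def c_def)
    have PD: "P k \<in> rankOneSet" for k using Pproj[of k] by (simp add: proj_def)
    
    have Yks: "Yk k $ i $ j = Yk k $ j $ i" for k i j
    proof -
      have "transpose (Wk k) = Wk k" using Wks by (simp add: sym_mats_def)
      moreover have "transpose (P k) = P k" using rankOne_sym[OF PD] .
      ultimately show ?thesis unfolding Ykeq sym_iff by simp
    qed
    have "Y $ i $ j = Y $ j $ i" for i j
    proof -
      have "(\<lambda>k. Yk k $ i $ j) \<longlonglongrightarrow> Y $ i $ j" by (intro tendsto_intros YkY)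
      moreover have "(\<lambda>k. Yk k $ i $ j) \<longlonglongrightarrow> Y $ j $ i"
        unfolding Yks[of _ i j] by (intro tendsto_intros YkY)
      ultimately show ?thesis by (rule LIMSEQ_unique)
    qed
    then have Ysym: "Y \<in> sym_mats" unfolding sym_mats_def sym_iff by simp
    
    have PW: "P \<longlonglongrightarrow> W"
    proof -
      have d0: "(\<lambda>k. dist (Wk k) W) \<longlonglongrightarrow> 0" using WkW tendsto_dist_iff by blast
      have bnd: "dist (P k) W \<le> 2 * dist (Wk k) W" for k
      proof -
        have "dist (Wk k) (P k) \<le> dist (Wk k) W" using Pproj[of k] assms(2) by (simp add: proj_def)
        moreover have "dist (P k) W \<le> dist (P k) (Wk k) + dist (Wk k) W" by (rule dist_triangle)
        ultimately show ?thesis by (simp add: dist_commute)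
      qed
      have "(\<lambda>k. dist (P k) W) \<longlonglongrightarrow> 0"
      proof (rule tendsto_sandwich[of "\<lambda>_. 0" _ _ "\<lambda>k. 2 * dist (Wk k) W"])
        show "\<forall>\<^sub>F k in sequentially. 0 \<le> dist (P k) W" by simp
        show "\<forall>\<^sub>F k in sequentially. dist (P k) W \<le> 2 * dist (Wk k) W" using bnd by simp
        show "(\<lambda>k. 0::real) \<longlonglongrightarrow> 0" by simp
        show "(\<lambda>k. 2 * dist (Wk k) W) \<longlonglongrightarrow> 0" using tendsto_mult_right_zero[OF d0, of 2] by simp
      qed
      then show ?thesis using tendsto_dist_iff by blast
    qed
    have zero: "Yk k *v (P k *v u) = 0" for k
      unfolding Ykeq scaleR_mv using proj_orth[OF Wks[rule_format] Pproj] by simp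
    have "(\<lambda>k. Yk k *v (P k *v u)) \<longlonglongrightarrow> Y *v (W *v u)"
      by (intro mv_tendsto YkY PW tendsto_const)
    then have "Y *v (W *v u) = 0" unfolding zero by (simp add: LIMSEQ_const_iff)
    then have "Y *v u = 0" using npos by (simp add: Wu mv_scaleR)
    with Ysym show ?thesis by simp
  qed
  have part2: "l = 0" if Yin: "Y \<in> lim_normal_cone rankOneSet W" and eq: "Diag l + Y = 0" for l Y
  proof -
    have Yu: "Y *v u = 0" using part1[OF Yin] by simp
    have Yd: "Y = - Diag l" using eq by (simp add: eq_neg_iff_add_eq_0 add.commute)
    have "(Y *v u) $ i = - (l $ i * u $ i)" for i
      by (simp add: Yd Diag_def matrix_vector_mult_def if_distrib if_distribR cong: if_cong)
    then have "l $ i * u $ i = 0" for i using Yu by (metis neg_equal_0_iff_equal zero_index)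
    then show "l = 0" using unz by (simp add: vec_eq_iff)
  qed
  show ?thesis using part1 part2 by blast
qed


end
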